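(* Let $(X,d,A)$ be a metric pair such that $A$ is not isolated, and let $p\in[1,\infty]$. Then no persistence diagram in $(D(X,A),W_p)$ has a compact neighborhood. Hence $(D(X,A),W_p)$ is not locally compact, and every compact subset of $(D(X,A),W_p)$ has empty interior.
   Context: A metric on $X$ is a map $d:X\times X\to[0,\infty]$ with $d(x,x)=0$, symmetry and the triangle inequality (infinite distances allowed, $d(x,y)=0$ need not imply $x=y$); a metric pair $(X,d,A)$ is such a space with a closed subset $A$. Write $d(x,A)=\inf_{a\in A}d(x,a)$ and $A^\delta=\{x:d(x,A)<\delta\}$. $A$ is isolated if there is $\delta>0$ with $A^\delta=A$. $D(X,A)$ is the set of finite formal sums $\sum_i x_i$ of points of $X\setminus A$ (repetitions allowed), whose elements are called persistence diagrams. A matching of $\hat\alpha=\sum_{i\in I}x_i$, $\hat\beta=\sum_{j\in J}y_j$ is a formal sum $\sum_{k\in K}(x_k,y_{\varphi(k)})+\sum_{i\in I\setminus K}(x_i,z_i)+\sum_{j\in J\setminus\varphi(K)}(w_j,y_j)$ with $K\subset I$, $\varphi$ injective, $z_i,w_j\in A$; its $p$-cost is the $\ell^p$ norm (sup norm if $p=\infty$) of the distances of paired points; $W_p$ is the infimum of $p$-costs. The topology is the metric topology of $W_p$. *)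

theory Defs
  imports "HOL-Analysis.Analysis" "HOL-Library.Multiset"
begin

text \<open>Extended pseudometrics: values in [0,\<infinity>] (ennreal), zero on the diagonal,
  symmetric, triangle inequality. Distinct points may have distance 0.\<close>
definition ext_metric :: "('a \<Rightarrow> 'a \<Rightarrow> ennreal) \<Rightarrow> bool" where
  "ext_metric d \<longleftrightarrow> (\<forall>x. d x x = 0) \<and> (\<forall>x y. d x y = d y x)
      \<and> (\<forall>x y z. d x z \<le> d x y + d y z)"

definition setdist_e :: "('a \<Rightarrow> 'a \<Rightarrow> ennreal) \<Rightarrow> 'a \<Rightarrow> 'a set \<Rightarrow> ennreal" where
  "setdist_e d x A = (INF a\<in>A. d x a)"

definition closed_e :: "('a \<Rightarrow> 'a \<Rightarrow> ennreal) \<Rightarrow> 'a set \<Rightarrow> bool" where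
  "closed_e d A \<longleftrightarrow> (\<forall>x. setdist_e d x A = 0 \<longrightarrow> x \<in> A)"

definition thickening :: "('a \<Rightarrow> 'a \<Rightarrow> ennreal) \<Rightarrow> 'a set \<Rightarrow> ennreal \<Rightarrow> 'a set" where
  "thickening d A \<delta> = {x. setdist_e d x A < \<delta>}"

definition isolated_set :: "('a \<Rightarrow> 'a \<Rightarrow> ennreal) \<Rightarrow> 'a set \<Rightarrow> bool" where
  "isolated_set d A \<longleftrightarrow> (\<exists>\<delta>>0. thickening d A \<delta> = A)"

text \<open>Persistence diagrams: finite formal sums (multisets) of points of X - A.\<close>
definition diagrams :: "'a set \<Rightarrow> 'a multiset set" where
  "diagrams A = {\<alpha>. set_mset \<alpha> \<subseteq> - A}"

text \<open>A matching of \<alpha> and \<beta>: a formal sum of pairs, each pair either matches a point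
  of \<alpha> with a point of \<beta>, or a point of \<alpha> with a point of A, or a point of A with
  a point of \<beta>; every point of \<alpha> (resp. \<beta>) used exactly with its multiplicity.\<close>
definition matching :: "'a set \<Rightarrow> 'a multiset \<Rightarrow> 'a multiset \<Rightarrow> ('a \<times> 'a) multiset \<Rightarrow> bool" where
  "matching A \<alpha> \<beta> M \<longleftrightarrow>
     (\<forall>(x,y)\<in>#M. \<not> (x \<in> A \<and> y \<in> A)) \<and>
     image_mset fst (filter_mset (\<lambda>(x,y). x \<notin> A) M) = \<alpha> \<and>
     image_mset snd (filter_mset (\<lambda>(x,y). y \<notin> A) M) = \<beta>"

definition match_cost :: "('a \<Rightarrow> 'a \<Rightarrow> ennreal) \<Rightarrow> ennreal \<Rightarrow> ('a \<times> 'a) multiset \<Rightarrow> ennreal" where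
  "match_cost d p M =
     (if p = \<infinity> then (SUP (x,y)\<in>set_mset M. d x y)
      else if (\<exists>(x,y)\<in>#M. d x y = \<infinity>) then \<infinity>
      else ennreal ((\<Sum>(x,y)\<in>#M. (enn2real (d x y)) powr (enn2real p)) powr (1 / enn2real p)))"

definition wasserstein :: "('a \<Rightarrow> 'a \<Rightarrow> ennreal) \<Rightarrow> 'a set \<Rightarrow> ennreal \<Rightarrow> 'a multiset \<Rightarrow> 'a multiset \<Rightarrow> ennreal" where
  "wasserstein d A p \<alpha> \<beta> = (INF M\<in>{M. matching A \<alpha> \<beta> M}. match_cost d p M)"

definition emetric_open :: "'b set \<Rightarrow> ('b \<Rightarrow> 'b \<Rightarrow> ennreal) \<Rightarrow> 'b set \<Rightarrow> bool" where
  "emetric_open S e U \<longleftrightarrow> U \<subseteq> S \<and> (\<forall>x\<in>U. \<exists>r>0. {y\<in>S. e x y < r} \<subseteq> U)"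

lemma istopology_emetric_open: "istopology (emetric_open S e)"
proof -
  have 1: "emetric_open S e (U \<inter> V)" if HU: "emetric_open S e U" and HV: "emetric_open S e V" for U V
    unfolding emetric_open_def
  proof (intro conjI ballI)
    show "U \<inter> V \<subseteq> S" using HU unfolding emetric_open_def by blast
    fix x assume "x \<in> U \<inter> V"
    then obtain r1 r2 where "r1 > 0" "r2 > 0" "{y \<in> S. e x y < r1} \<subseteq> U" "{y \<in> S. e x y < r2} \<subseteq> V"
      using HU HV unfolding emetric_open_def by blast
    then show "\<exists>r>0. {y \<in> S. e x y < r} \<subseteq> U \<inter> V"
      by (intro exI[of _ "min r1 r2"]) auto
  qed
  have 2: "emetric_open S e (\<Union>K)" if H: "\<forall>U\<in>K. emetric_open S e U" for K
    unfolding emetric_open_def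
  proof (intro conjI ballI)
    show "\<Union> K \<subseteq> S" using H unfolding emetric_open_def by blast
    fix x assume "x \<in> \<Union> K"
    then obtain U where "U \<in> K" "x \<in> U" by blast
    with H obtain r where "r > 0" "{y \<in> S. e x y < r} \<subseteq> U" unfolding emetric_open_def by blast
    with \<open>U \<in> K\<close> show "\<exists>r>0. {y \<in> S. e x y < r} \<subseteq> \<Union> K" by blast
  qed
  show ?thesis unfolding istopology_def using 1 2 by blast
qed

definition emetric_topology :: "'b set \<Rightarrow> ('b \<Rightarrow> 'b \<Rightarrow> ennreal) \<Rightarrow> 'b topology" where
  "emetric_topology S e = topology (emetric_open S e)"

lemma openin_emetric_topology: "openin (emetric_topology S e) = emetric_open S e"
  unfolding emetric_topology_def using istopology_emetric_open topology_inverse' by blast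

definition Wp_topology :: "('a \<Rightarrow> 'a \<Rightarrow> ennreal) \<Rightarrow> 'a set \<Rightarrow> ennreal \<Rightarrow> 'a multiset topology" where
  "Wp_topology d A p = emetric_topology (diagrams A) (wasserstein d A p)"

end

theory Submission
  imports Defs
begin


lemma powr_lip:
  fixes a b t P :: real
  assumes "0 \<le> a" "a \<le> b" "b \<le> t" "1 \<le> P"
  shows "b powr P \<le> a powr P + P * t powr (P - 1) * (b - a)"
proof (cases "a = b")
  case True then show ?thesis by simp
next
  case False
  then have ab: "a < b" using assms by simp
  have tp: "0 \<le> t powr (P - 1)" by simp
  show ?thesis
  proof (cases "a = 0")
    case True
    have b0: "0 < b" using ab True by simp
    have "b powr P = b powr (1 + (P - 1))" by simp
    also have "\<dots> = b * b powr (P - 1)"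
      using b0 by (simp only: powr_add powr_one)
    also have "\<dots> \<le> b * t powr (P - 1)"
      using b0 assms by (intro mult_left_mono powr_mono2) auto
    also have "\<dots> \<le> P * t powr (P - 1) * b"
      using b0 assms tp by (simp add: mult.commute mult_right_mono)
    finally show ?thesis using True by simp
  next
    case False
    then have a0: "0 < a" using assms by simp
    have "\<exists>z. a < z \<and> z < b \<and> (b powr P - a powr P = (b - a) * (P * z powr (P - 1)))"
      by (rule MVT2[OF ab]) (use a0 in \<open>auto intro!: has_real_derivative_powr\<close>)
    then obtain z where z: "a < z" "z < b" "b powr P - a powr P = (b - a) * (P * z powr (P - 1))" by blast
    have "z powr (P - 1) \<le> t powr (P - 1)"
      using z a0 assms by (intro powr_mono2) auto
    then have "(b - a) * (P * z powr (P - 1)) \<le> (b - a) * (P * t powr (P - 1))"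
      using ab assms by (intro mult_left_mono) auto
    then show ?thesis using z by (simp add: algebra_simps)
  qed
qed

lemma sum_mset_filter_image:
  "sum_mset (image_mset f (image_mset g (filter_mset P M))) =
   sum_mset (image_mset (\<lambda>z. if P z then f (g z) else (0::'b::comm_monoid_add)) M)"
  by (induction M) auto

lemma sum_mset_add3:
  "sum_mset (image_mset (\<lambda>z. f z + g z + k z) M) =
   sum_mset (image_mset f M) + sum_mset (image_mset g M) + sum_mset (image_mset (k::_ \<Rightarrow> real) M)"
  by (induction M) auto

lemma transfer:
  fixes h :: "'a \<Rightarrow> real" and e q :: "'a \<times> 'a \<Rightarrow> real"
  assumes m: "matching A \<gamma> \<gamma>' M"
    and lip: "\<And>z. z \<in># M \<Longrightarrow> snd z \<notin> A \<Longrightarrow> fst z \<notin> A \<Longrightarrow> h (snd z) \<le> h (fst z) + L * e z"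
    and ab: "\<And>z. z \<in># M \<Longrightarrow> fst z \<in> A \<Longrightarrow> snd z \<notin> A \<Longrightarrow> h (snd z) \<le> q z"
    and h0: "\<And>x. 0 \<le> h x" and L0: "0 \<le> L" and e0: "\<And>z. z \<in># M \<Longrightarrow> 0 \<le> e z"
  shows "sum_mset (image_mset h \<gamma>') \<le> sum_mset (image_mset h \<gamma>)
     + L * sum_mset (image_mset (\<lambda>z. if fst z \<notin> A then e z else 0) M)
     + sum_mset (image_mset (\<lambda>z. if fst z \<in> A then q z else 0) M)"
proof -
  have g1: "\<gamma> = image_mset fst (filter_mset (\<lambda>z. fst z \<notin> A) M)"
    and g2: "\<gamma>' = image_mset snd (filter_mset (\<lambda>z. snd z \<notin> A) M)"
    and nb: "\<And>z. z \<in># M \<Longrightarrow> \<not> (fst z \<in> A \<and> snd z \<in> A)"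
  proof -
    have e1: "(\<lambda>(x,y). x \<notin> A) = (\<lambda>z::'a\<times>'a. fst z \<notin> A)"
      and e2: "(\<lambda>(x,y). y \<notin> A) = (\<lambda>z::'a\<times>'a. snd z \<notin> A)" by auto
    show "\<gamma> = image_mset fst (filter_mset (\<lambda>z. fst z \<notin> A) M)"
      "\<gamma>' = image_mset snd (filter_mset (\<lambda>z. snd z \<notin> A) M)"
      "\<And>z. z \<in># M \<Longrightarrow> \<not> (fst z \<in> A \<and> snd z \<in> A)"
      using m unfolding matching_def e1 e2 by auto
  qed
  have "sum_mset (image_mset h \<gamma>') = sum_mset (image_mset (\<lambda>z. if snd z \<notin> A then h (snd z) else 0) M)"
    unfolding g2 by (rule sum_mset_filter_image)
  also have "\<dots> \<le> sum_mset (image_mset (\<lambda>z. (if fst z \<notin> A then h (fst z) else 0)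
        + L * (if fst z \<notin> A then e z else 0) + (if fst z \<in> A then q z else 0)) M)"
  proof (rule sum_mset_mono)
    fix z assume z: "z \<in># M"
    show "(if snd z \<notin> A then h (snd z) else 0) \<le> (if fst z \<notin> A then h (fst z) else 0)
        + L * (if fst z \<notin> A then e z else 0) + (if fst z \<in> A then q z else 0)"
      using lip[OF z] ab[OF z] nb[OF z] h0[of "fst z"] e0[OF z] L0
      by (auto simp: mult_nonneg_nonneg)
  qed
  also have "\<dots> = sum_mset (image_mset h \<gamma>)
     + L * sum_mset (image_mset (\<lambda>z. if fst z \<notin> A then e z else 0) M)
     + sum_mset (image_mset (\<lambda>z. if fst z \<in> A then q z else 0) M)"
    unfolding sum_mset_add3 g1 sum_mset_filter_image sum_mset_distrib_left by simp
  finally show ?thesis .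
qed

lemma sd_le: "x \<in> A \<Longrightarrow> setdist_e d y A \<le> d y x"
  unfolding setdist_e_def by (rule INF_lower)

lemma sd_tri:
  assumes "ext_metric d"
  shows "setdist_e d y A \<le> setdist_e d x A + d x y"
proof (cases "d x y = top")
  case True then show ?thesis by simp
next
  case False
  have "\<And>a. a \<in> A \<Longrightarrow> setdist_e d y A - d x y \<le> d x a"
  proof -
    fix a assume a: "a \<in> A"
    have "setdist_e d y A \<le> d y a" using sd_le[OF a] .
    also have "\<dots> \<le> d y x + d x a" using assms unfolding ext_metric_def by blast
    also have "\<dots> = d x y + d x a" using assms unfolding ext_metric_def by metis
    finally show "setdist_e d y A - d x y \<le> d x a"
      using False by (simp add: ennreal_minus_le_iff)
  qed
  then have "setdist_e d y A - d x y \<le> setdist_e d x A"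
    unfolding setdist_e_def by (rule INF_greatest)
  then show ?thesis using False by (simp add: ennreal_minus_le_iff add.commute)
qed

lemma sd_pos:
  assumes "closed_e d A" "x \<notin> A" shows "0 < setdist_e d x A"
  using assms unfolding closed_e_def using not_gr_zero by blast

lemma sd_small:
  assumes "ext_metric d" "\<not> isolated_set d A" "0 < \<epsilon>"
  shows "\<exists>x. x \<notin> A \<and> setdist_e d x A < \<epsilon>"
proof -
  have "A \<subseteq> thickening d A \<epsilon>"
  proof
    fix a assume a: "a \<in> A"
    have "setdist_e d a A \<le> d a a" by (rule sd_le[OF a])
    also have "\<dots> = 0" using assms(1) unfolding ext_metric_def by blast
    finally show "a \<in> thickening d A \<epsilon>" using assms(3) unfolding thickening_def by simp
  qed
  moreover have "thickening d A \<epsilon> \<noteq> A" using assms(2,3) unfolding isolated_set_def by blast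
  ultimately show ?thesis unfolding thickening_def by blast
qed

lemma enn2real_le_of: "u \<le> ennreal e \<Longrightarrow> 0 \<le> e \<Longrightarrow> enn2real u \<le> e"
  by (metis enn2real_ennreal enn2real_mono ennreal_less_top)

lemma min_sd_real:
  assumes "ext_metric d" "0 \<le> t" "d x y = ennreal e" "0 \<le> e"
  shows "enn2real (min (setdist_e d y A) (ennreal t)) \<le> min (enn2real (min (setdist_e d x A) (ennreal t)) + e) t"
proof -
  have "min (setdist_e d y A) (ennreal t) \<le> min (setdist_e d x A) (ennreal t) + ennreal e"
  proof -
    have st: "setdist_e d y A \<le> setdist_e d x A + ennreal e"
      using sd_tri[OF assms(1), of y A x] assms(3) by simp
    show ?thesis
    proof (cases "setdist_e d x A \<le> ennreal t")
      case True
      then have "min (setdist_e d x A) (ennreal t) = setdist_e d x A" by simp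
      then show ?thesis using st min.cobounded1 order.trans by metis
    next
      case False
      then have "min (setdist_e d x A) (ennreal t) = ennreal t" by simp
      moreover have "ennreal t \<le> ennreal t + ennreal e" by simp
      ultimately show ?thesis using min.cobounded2 order.trans by metis
    qed
  qed
  moreover have "min (setdist_e d x A) (ennreal t) = ennreal (enn2real (min (setdist_e d x A) (ennreal t)))"
  proof -
    have "min (setdist_e d x A) (ennreal t) \<noteq> top"
    proof
      assume "min (setdist_e d x A) (ennreal t) = top"
      then have "top \<le> ennreal t" using min.cobounded2[of "setdist_e d x A" "ennreal t"] by simp
      then show False by (simp add: top_unique)
    qed
    then show ?thesis by (metis ennreal_enn2real_if)
  qed
  ultimately have "min (setdist_e d y A) (ennreal t) \<le> ennreal (enn2real (min (setdist_e d x A) (ennreal t)) + e)"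
    using assms by (simp add: ennreal_plus)
  then have 1: "enn2real (min (setdist_e d y A) (ennreal t)) \<le> enn2real (min (setdist_e d x A) (ennreal t)) + e"
    using assms by (intro enn2real_le_of) auto
  have 2: "enn2real (min (setdist_e d y A) (ennreal t)) \<le> t"
    using assms(2) by (intro enn2real_le_of) auto
  show ?thesis using 1 2 by simp
qed

lemma h_lip:
  assumes "ext_metric d" "0 \<le> t" "1 \<le> P" "d x y = ennreal e" "0 \<le> e"
  shows "enn2real (min (setdist_e d y A) (ennreal t)) powr P \<le>
         enn2real (min (setdist_e d x A) (ennreal t)) powr P + P * t powr (P - 1) * e"
proof -
  let ?a = "enn2real (min (setdist_e d x A) (ennreal t))"
  let ?b = "enn2real (min (setdist_e d y A) (ennreal t))"
  have b: "?b \<le> min (?a + e) t" by (rule min_sd_real[OF assms(1,2,4,5)])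
  have a: "?a \<le> t" using assms(2) by (intro enn2real_le_of) auto
  have "?b powr P \<le> (min (?a + e) t) powr P"
    using b assms by (intro powr_mono2) auto
  also have "\<dots> \<le> ?a powr P + P * t powr (P - 1) * (min (?a + e) t - ?a)"
    using a assms by (intro powr_lip) auto
  also have "\<dots> \<le> ?a powr P + P * t powr (P - 1) * e"
    using assms by (intro add_left_mono mult_left_mono) auto
  finally show ?thesis .
qed

lemma h_A:
  assumes "ext_metric d" "0 \<le> t" "0 < P" "x \<in> A" "d x y = ennreal e" "0 \<le> e"
  shows "enn2real (min (setdist_e d y A) (ennreal t)) powr P \<le> e powr P"
proof -
  have "setdist_e d y A \<le> ennreal e"
    using sd_le[OF assms(4), of d y] assms(1,5) unfolding ext_metric_def by metis
  then have "min (setdist_e d y A) (ennreal t) \<le> ennreal e" by (simp add: min.coboundedI1)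
  then have "enn2real (min (setdist_e d y A) (ennreal t)) \<le> e" using assms by (intro enn2real_le_of) auto
  then show ?thesis using assms by (intro powr_mono2) auto
qed

lemma g_lip:
  assumes "ext_metric d" "0 \<le> t" "d x y = ennreal e" "0 \<le> e"
  shows "max 0 (enn2real (min (setdist_e d y A) (ennreal t)) - t/2) \<le>
         max 0 (enn2real (min (setdist_e d x A) (ennreal t)) - t/2) + e"
proof -
  have "enn2real (min (setdist_e d y A) (ennreal t)) \<le> enn2real (min (setdist_e d x A) (ennreal t)) + e"
    using min_sd_real[OF assms, of A] by simp
  then show ?thesis using assms(4) unfolding max_def by auto
qed

lemma g_A:
  assumes "ext_metric d" "x \<in> A" "d x y = ennreal e" "0 \<le> e" "e < t/2"
  shows "max 0 (enn2real (min (setdist_e d y A) (ennreal t)) - t/2) = 0"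
proof -
  have "setdist_e d y A \<le> ennreal e"
    using sd_le[OF assms(2), of d y] assms(1,3) unfolding ext_metric_def by metis
  then have "min (setdist_e d y A) (ennreal t) \<le> ennreal e" by (simp add: min.coboundedI1)
  then have "enn2real (min (setdist_e d y A) (ennreal t)) \<le> e" using assms by (intro enn2real_le_of) auto
  then show ?thesis using assms by auto
qed

lemma openin_Wp: "openin (Wp_topology d A p) U = emetric_open (diagrams A) (wasserstein d A p) U"
  by (simp add: Wp_topology_def openin_emetric_topology)

lemma topspace_Wp: "topspace (Wp_topology d A p) = diagrams A"
proof -
  have "openin (Wp_topology d A p) (diagrams A)"
    unfolding openin_Wp emetric_open_def by (auto intro: exI[of _ 1])
  moreover have "\<And>U. openin (Wp_topology d A p) U \<Longrightarrow> U \<subseteq> diagrams A"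
    unfolding openin_Wp emetric_open_def by blast
  ultimately show ?thesis unfolding topspace_def by blast
qed

lemma W_less: "wasserstein d A p \<gamma> \<gamma>' < r \<Longrightarrow> \<exists>M. matching A \<gamma> \<gamma>' M \<and> match_cost d p M < r"
  unfolding wasserstein_def by (simp add: INF_less_iff)

lemma cost_inf:
  assumes "match_cost d top M < ennreal \<rho>" "z \<in># M"
  shows "d (fst z) (snd z) < ennreal \<rho>"
proof -
  have "(SUP (x,y)\<in>set_mset M. d x y) < ennreal \<rho>" using assms(1) unfolding match_cost_def by simp
  from SUP_lessD[OF this] assms(2) show ?thesis by (auto simp: case_prod_beta)
qed

lemma sum_mset_nonneg':
  fixes f :: "'b \<Rightarrow> real"
  shows "(\<And>w. w \<in># M \<Longrightarrow> 0 \<le> f w) \<Longrightarrow> 0 \<le> sum_mset (image_mset f M)"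
  by (induction M) auto

lemma elem_le_sum_mset:
  fixes f :: "'b \<Rightarrow> real"
  assumes "z \<in># M" "\<And>w. w \<in># M \<Longrightarrow> 0 \<le> f w"
  shows "f z \<le> sum_mset (image_mset f M)"
proof -
  obtain M' where M: "M = add_mset z M'" using assms(1) by (metis multi_member_split)
  have "0 \<le> sum_mset (image_mset f M')" using assms(2) unfolding M by (intro sum_mset_nonneg') auto
  then show ?thesis unfolding M by simp
qed

lemma cost_fin:
  assumes "p \<noteq> top" "1 \<le> p" "match_cost d p M < ennreal \<rho>" "0 < \<rho>"
  shows "\<And>z. z \<in># M \<Longrightarrow> d (fst z) (snd z) = ennreal (enn2real (d (fst z) (snd z)))"
    and "sum_mset (image_mset (\<lambda>z. enn2real (d (fst z) (snd z)) powr enn2real p) M) < \<rho> powr enn2real p"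
    and "\<And>z. z \<in># M \<Longrightarrow> enn2real (d (fst z) (snd z)) < \<rho>"
proof -
  let ?P = "enn2real p"
  have "p < top" using assms(1) by (simp add: less_top)
  from enn2real_mono[OF assms(2) this] have P1: "1 \<le> ?P" by simp
  have nf: "\<not> (\<exists>(x,y)\<in>#M. d x y = \<infinity>)"
    using assms(1,3) unfolding match_cost_def by (auto split: if_splits)
  then show fin: "\<And>z. z \<in># M \<Longrightarrow> d (fst z) (snd z) = ennreal (enn2real (d (fst z) (snd z)))"
    by (auto simp: case_prod_beta ennreal_enn2real_if)
  let ?S = "sum_mset (image_mset (\<lambda>z. enn2real (d (fst z) (snd z)) powr ?P) M)"
  have "(\<lambda>(x,y). (enn2real (d x y)) powr ?P) = (\<lambda>z. enn2real (d (fst z) (snd z)) powr ?P)" by auto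
  then have eqS: "(\<Sum>(x,y)\<in>#M. (enn2real (d x y)) powr ?P) = ?S" by simp
  have S0: "0 \<le> ?S" by (intro sum_mset_nonneg') auto
  have "ennreal (?S powr (1 / ?P)) < ennreal \<rho>"
    using assms(1,3) nf eqS unfolding match_cost_def by simp
  then have "?S powr (1 / ?P) < \<rho>" by (simp add: ennreal_less_iff)
  then have "(?S powr (1 / ?P)) powr ?P < \<rho> powr ?P"
    using P1 by (intro powr_less_mono2) auto
  moreover have "(?S powr (1 / ?P)) powr ?P = ?S" using P1 S0 by (simp add: powr_powr)
  ultimately show S: "?S < \<rho> powr ?P" by simp
  fix z assume z: "z \<in># M"
  have "enn2real (d (fst z) (snd z)) powr ?P \<le> ?S"
    by (rule elem_le_sum_mset[OF z]) auto
  then have "enn2real (d (fst z) (snd z)) powr ?P < \<rho> powr ?P" using S by simp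
  show "enn2real (d (fst z) (snd z)) < \<rho>"
  proof (rule ccontr)
    assume "\<not> enn2real (d (fst z) (snd z)) < \<rho>"
    then have "\<rho> powr ?P \<le> enn2real (d (fst z) (snd z)) powr ?P"
      using P1 assms(4) by (intro powr_mono2) auto
    then show False using \<open>enn2real (d (fst z) (snd z)) powr ?P < \<rho> powr ?P\<close> by simp
  qed
qed

lemma sum_if_const:
  fixes c :: real
  assumes "matching A \<gamma> \<gamma>' M" "\<And>z. z \<in># M \<Longrightarrow> fst z \<notin> A \<Longrightarrow> e z \<le> c"
  shows "sum_mset (image_mset (\<lambda>z. if fst z \<notin> A then e z else 0) M) \<le> c * real (size \<gamma>)"
proof -
  have e1: "(\<lambda>(x,y). x \<notin> A) = (\<lambda>z::'a\<times>'a. fst z \<notin> A)" by auto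
  have g1: "\<gamma> = image_mset fst (filter_mset (\<lambda>z. fst z \<notin> A) M)"
    using assms(1) unfolding matching_def e1 by auto
  have "sum_mset (image_mset (\<lambda>z. if fst z \<notin> A then e z else 0) M)
      \<le> sum_mset (image_mset (\<lambda>z. if fst z \<notin> A then c else 0) M)"
    using assms(2) by (intro sum_mset_mono) auto
  also have "\<dots> = sum_mset (image_mset (\<lambda>_. c) \<gamma>)"
    unfolding g1 sum_mset_filter_image by simp
  also have "\<dots> = c * real (size \<gamma>)" by simp
  finally show ?thesis .
qed

lemma open_fin:
  fixes c t :: real
  assumes dm: "ext_metric d" and pt: "p \<noteq> top" and p1: "1 \<le> p" and t0: "0 < t"
  shows "openin (Wp_topology d A p) {\<gamma> \<in> diagrams A.
     sum_mset (image_mset (\<lambda>y. enn2real (min (setdist_e d y A) (ennreal t)) powr enn2real p) \<gamma>) < c}"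
  unfolding openin_Wp emetric_open_def
proof (intro conjI ballI)
  let ?P = "enn2real p"
  let ?h = "\<lambda>y. enn2real (min (setdist_e d y A) (ennreal t)) powr ?P"
  let ?\<Phi> = "\<lambda>\<gamma>. sum_mset (image_mset ?h \<gamma>)"
  have "p < top" using pt by (simp add: less_top)
  from enn2real_mono[OF p1 this] have P1: "1 \<le> ?P" by simp
  show "{\<gamma> \<in> diagrams A. ?\<Phi> \<gamma> < c} \<subseteq> diagrams A" by blast
  fix \<gamma> assume g: "\<gamma> \<in> {\<gamma> \<in> diagrams A. ?\<Phi> \<gamma> < c}"
  define gap where "gap = c - ?\<Phi> \<gamma>"
  define L where "L = ?P * t powr (?P - 1)"
  define \<rho> where "\<rho> = min 1 (gap / (L * real (size \<gamma>) + 2))"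
  have gap0: "0 < gap" using g unfolding gap_def by simp
  have L0: "0 \<le> L" using P1 unfolding L_def by simp
  have den: "0 < L * real (size \<gamma>) + 2" using L0 by (simp add: add_nonneg_pos)
  have r0: "0 < \<rho>" unfolding \<rho>_def using gap0 den by simp
  have r1: "\<rho> \<le> 1" unfolding \<rho>_def by simp
  have "(L * real (size \<gamma>) + 1) * \<rho> \<le> (L * real (size \<gamma>) + 1) * (gap / (L * real (size \<gamma>) + 2))"
    unfolding \<rho>_def using L0 by (intro mult_left_mono) auto
  also have "\<dots> < gap"
    using gap0 den by (simp add: field_simps)
  finally have key: "(L * real (size \<gamma>) + 1) * \<rho> < gap" .
  show "\<exists>r>0. {y \<in> diagrams A. wasserstein d A p \<gamma> y < r} \<subseteq> {\<gamma> \<in> diagrams A. ?\<Phi> \<gamma> < c}"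
  proof (intro exI[of _ "ennreal \<rho>"] conjI subsetI)
    show "0 < ennreal \<rho>" using r0 by simp
    fix \<gamma>' assume g': "\<gamma>' \<in> {y \<in> diagrams A. wasserstein d A p \<gamma> y < ennreal \<rho>}"
    then obtain M where M: "matching A \<gamma> \<gamma>' M" "match_cost d p M < ennreal \<rho>"
      using W_less by blast
    let ?e = "\<lambda>z. enn2real (d (fst z) (snd z))"
    note cf = cost_fin[OF pt p1 M(2) r0]
    have "?\<Phi> \<gamma>' \<le> ?\<Phi> \<gamma> + L * sum_mset (image_mset (\<lambda>z. if fst z \<notin> A then ?e z else 0) M)
       + sum_mset (image_mset (\<lambda>z. if fst z \<in> A then ?e z powr ?P else 0) M)"
    proof (rule transfer[OF M(1)])
      fix z assume z: "z \<in># M"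
      show "?h (snd z) \<le> ?h (fst z) + L * ?e z"
        unfolding L_def using h_lip[OF dm _ P1 cf(1)[OF z]] t0 by simp
      show "fst z \<in> A \<Longrightarrow> ?h (snd z) \<le> ?e z powr ?P"
        using h_A[OF dm _ _ _ cf(1)[OF z]] t0 P1 by simp
      show "0 \<le> ?e z" by simp
    qed (use L0 in auto)
    also have "\<dots> \<le> ?\<Phi> \<gamma> + L * (\<rho> * real (size \<gamma>)) + \<rho> powr ?P"
    proof -
      have "sum_mset (image_mset (\<lambda>z. if fst z \<notin> A then ?e z else 0) M) \<le> \<rho> * real (size \<gamma>)"
        using cf(3) by (intro sum_if_const[OF M(1)]) (simp add: less_imp_le)
      moreover have "sum_mset (image_mset (\<lambda>z. if fst z \<in> A then ?e z powr ?P else 0) M)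
          \<le> sum_mset (image_mset (\<lambda>z. ?e z powr ?P) M)"
        by (intro sum_mset_mono) auto
      ultimately show ?thesis using cf(2) L0
        by (smt (verit, best) mult_left_mono)
    qed
    also have "\<rho> powr ?P \<le> \<rho>"
      using powr_mono'[of 1 ?P \<rho>] P1 r0 r1 by simp
    then have "?\<Phi> \<gamma> + L * (\<rho> * real (size \<gamma>)) + \<rho> powr ?P \<le> ?\<Phi> \<gamma> + (L * real (size \<gamma>) + 1) * \<rho>"
      by (simp add: algebra_simps)
    finally have "?\<Phi> \<gamma>' < c" using key unfolding gap_def by simp
    then show "\<gamma>' \<in> {\<gamma> \<in> diagrams A. ?\<Phi> \<gamma> < c}" using g' by simp
  qed
qed

lemma open_inf:
  fixes c t :: real
  assumes dm: "ext_metric d" and t0: "0 < t"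
  shows "openin (Wp_topology d A top) {\<gamma> \<in> diagrams A.
     sum_mset (image_mset (\<lambda>y. max 0 (enn2real (min (setdist_e d y A) (ennreal t)) - t/2)) \<gamma>) < c}"
  unfolding openin_Wp emetric_open_def
proof (intro conjI ballI)
  let ?h = "\<lambda>y. max 0 (enn2real (min (setdist_e d y A) (ennreal t)) - t/2)"
  let ?\<Phi> = "\<lambda>\<gamma>. sum_mset (image_mset ?h \<gamma>)"
  show "{\<gamma> \<in> diagrams A. ?\<Phi> \<gamma> < c} \<subseteq> diagrams A" by blast
  fix \<gamma> assume g: "\<gamma> \<in> {\<gamma> \<in> diagrams A. ?\<Phi> \<gamma> < c}"
  define gap where "gap = c - ?\<Phi> \<gamma>"
  define \<rho> where "\<rho> = min (t/4) (gap / (real (size \<gamma>) + 1))"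
  have gap0: "0 < gap" using g unfolding gap_def by simp
  have r0: "0 < \<rho>" unfolding \<rho>_def using gap0 t0 by simp
  have r1: "\<rho> < t/2" unfolding \<rho>_def using t0 by simp
  have "real (size \<gamma>) * \<rho> \<le> real (size \<gamma>) * (gap / (real (size \<gamma>) + 1))"
    unfolding \<rho>_def by (intro mult_left_mono) auto
  also have "\<dots> < gap"
    using gap0 by (simp add: field_simps)
  finally have key: "real (size \<gamma>) * \<rho> < gap" .
  show "\<exists>r>0. {y \<in> diagrams A. wasserstein d A top \<gamma> y < r} \<subseteq> {\<gamma> \<in> diagrams A. ?\<Phi> \<gamma> < c}"
  proof (intro exI[of _ "ennreal \<rho>"] conjI subsetI)
    show "0 < ennreal \<rho>" using r0 by simp
    fix \<gamma>' assume g': "\<gamma>' \<in> {y \<in> diagrams A. wasserstein d A top \<gamma> y < ennreal \<rho>}"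
    then obtain M where M: "matching A \<gamma> \<gamma>' M" "match_cost d top M < ennreal \<rho>"
      using W_less by blast
    let ?e = "\<lambda>z. enn2real (d (fst z) (snd z))"
    have dl: "\<And>z. z \<in># M \<Longrightarrow> d (fst z) (snd z) < ennreal \<rho>" using cost_inf[OF M(2)] by blast
    have cf1: "\<And>z. z \<in># M \<Longrightarrow> d (fst z) (snd z) = ennreal (?e z)"
      using dl by (metis ennreal_enn2real_if ennreal_less_top order_less_imp_not_less top.not_eq_extremum)
    have cf3: "\<And>z. z \<in># M \<Longrightarrow> ?e z < \<rho>"
      using dl cf1 r0 by (metis ennreal_less_iff enn2real_nonneg)
    have "?\<Phi> \<gamma>' \<le> ?\<Phi> \<gamma> + 1 * sum_mset (image_mset (\<lambda>z. if fst z \<notin> A then ?e z else 0) M)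
       + sum_mset (image_mset (\<lambda>z. if fst z \<in> A then (0::real) else 0) M)"
    proof (rule transfer[OF M(1)])
      fix z assume z: "z \<in># M"
      show "?h (snd z) \<le> ?h (fst z) + 1 * ?e z"
        using g_lip[OF dm _ cf1[OF z]] t0 by simp
      show "fst z \<in> A \<Longrightarrow> ?h (snd z) \<le> 0"
        using g_A[OF dm _ cf1[OF z]] cf3[OF z] r1 by simp
      show "0 \<le> ?e z" by simp
    qed auto
    also have "\<dots> \<le> ?\<Phi> \<gamma> + \<rho> * real (size \<gamma>)"
      using sum_if_const[OF M(1), of ?e \<rho>] cf3 by (simp add: less_imp_le)
    finally have "?\<Phi> \<gamma>' < c" using key unfolding gap_def by (simp add: mult.commute)
    then show "\<gamma>' \<in> {\<gamma> \<in> diagrams A. ?\<Phi> \<gamma> < c}" using g' by simp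
  qed
qed

lemma M0_matching:
  assumes "\<alpha> \<in> diagrams A" "a \<in> A" "x \<notin> A"
  shows "matching A \<alpha> (\<alpha> + replicate_mset m x) (image_mset (\<lambda>y. (y,y)) \<alpha> + replicate_mset m (a,x))"
proof -
  have aA: "\<And>y. y \<in># \<alpha> \<Longrightarrow> y \<notin> A" using assms(1) unfolding diagrams_def by auto
  have f1: "filter_mset (\<lambda>(u,v). u \<notin> A) (image_mset (\<lambda>y. (y,y)) \<alpha>) = image_mset (\<lambda>y. (y,y)) \<alpha>"
    using aA by (induction \<alpha>) auto
  have f2: "filter_mset (\<lambda>(u,v). v \<notin> A) (image_mset (\<lambda>y. (y,y)) \<alpha>) = image_mset (\<lambda>y. (y,y)) \<alpha>"
    using aA by (induction \<alpha>) auto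
  have f3: "filter_mset (\<lambda>(u,v). u \<notin> A) (replicate_mset m (a,x)) = {#}"
    using assms(2) by (induction m) auto
  have f4: "filter_mset (\<lambda>(u,v). v \<notin> A) (replicate_mset m (a,x)) = replicate_mset m (a,x)"
    using assms(3) by (induction m) auto
  show ?thesis unfolding matching_def
    using aA assms f1 f2 f3 f4 by (auto simp: image_mset.compositionality o_def)
qed

lemma W_M0_inf:
  assumes "ext_metric d" "\<alpha> \<in> diagrams A" "a \<in> A" "x \<notin> A"
  shows "wasserstein d A top \<alpha> (\<alpha> + replicate_mset m x) \<le> d a x"
proof -
  let ?M = "image_mset (\<lambda>y. (y,y)) \<alpha> + replicate_mset m (a,x)"
  have "wasserstein d A top \<alpha> (\<alpha> + replicate_mset m x) \<le> match_cost d top ?M"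
    unfolding wasserstein_def using M0_matching[OF assms(2-4)] by (intro INF_lower) simp
  also have "\<dots> \<le> d a x"
    unfolding match_cost_def using assms(1) unfolding ext_metric_def
    by (auto intro!: SUP_least split: if_splits)
  finally show ?thesis .
qed

lemma W_M0_fin:
  assumes "ext_metric d" "\<alpha> \<in> diagrams A" "a \<in> A" "x \<notin> A" "p \<noteq> top" "1 \<le> p"
    and "d a x = ennreal s" "0 \<le> s"
  shows "wasserstein d A p \<alpha> (\<alpha> + replicate_mset m x) \<le> ennreal ((real m * s powr enn2real p) powr (1 / enn2real p))"
proof -
  let ?M = "image_mset (\<lambda>y. (y,y)) \<alpha> + replicate_mset m (a,x)"
  let ?P = "enn2real p"
  have dz: "\<And>y. d y y = 0" using assms(1) unfolding ext_metric_def by blast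
  have "wasserstein d A p \<alpha> (\<alpha> + replicate_mset m x) \<le> match_cost d p ?M"
    unfolding wasserstein_def using M0_matching[OF assms(2-4)] by (intro INF_lower) simp
  also have "match_cost d p ?M = ennreal ((real m * s powr ?P) powr (1 / ?P))"
  proof -
    have nf: "\<not> (\<exists>(u,v)\<in>#?M. d u v = \<infinity>)" using dz assms(7) by auto
    have "(\<Sum>(u,v)\<in>#?M. (enn2real (d u v)) powr ?P) = real m * s powr ?P"
      using dz assms(7,8) by (simp add: image_mset.compositionality o_def)
    then show ?thesis unfolding match_cost_def using nf assms(5) by simp
  qed
  finally show ?thesis .
qed

lemma numerics:
  fixes P \<delta> \<rho> s :: real
  assumes P1: "1 \<le> P" and d0: "0 < \<delta>" and dr: "4 * \<delta> < \<rho>" and s0: "0 \<le> s" and s2: "s < 2 * \<delta>"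
  shows "real (nat \<lfloor>(\<rho> / (2 * \<delta>)) powr P\<rfloor>) * s powr P < \<rho> powr P"
    and "\<rho> powr P / 2 powr (P + 1) \<le> real (nat \<lfloor>(\<rho> / (2 * \<delta>)) powr P\<rfloor>) * \<delta> powr P"
proof -
  define q where "q = \<rho> / (2 * \<delta>)"
  define z where "z = q powr P"
  define m where "m = nat \<lfloor>z\<rfloor>"
  have q2: "2 < q" unfolding q_def using d0 dr by (simp add: field_simps)
  have "q powr 1 \<le> q powr P" using q2 P1 by (intro powr_mono) auto
  then have z2: "2 < z" unfolding z_def using q2 by simp
  have mz: "real m \<le> z" "z - 1 < real m" unfolding m_def using z2 by linarith+
  have m1: "1 \<le> real m" "z / 2 \<le> real m" using mz z2 by linarith+
  have r: "q * (2 * \<delta>) = \<rho>" unfolding q_def using d0 by simp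
  have zr: "z * (2 * \<delta>) powr P = \<rho> powr P"
    unfolding z_def using q2 d0 r by (metis powr_mult less_eq_real_def order.strict_trans zero_less_two mult_pos_pos)
  have "s powr P < (2 * \<delta>) powr P" using s0 s2 P1 by (intro powr_less_mono2) auto
  then have "real m * s powr P < real m * (2 * \<delta>) powr P" using m1 by simp
  also have "\<dots> \<le> z * (2 * \<delta>) powr P" using mz by (intro mult_right_mono) auto
  finally show "real (nat \<lfloor>(\<rho> / (2 * \<delta>)) powr P\<rfloor>) * s powr P < \<rho> powr P"
    using zr unfolding m_def z_def q_def by simp
  have t2: "(2 * \<delta>) powr P = 2 powr P * \<delta> powr P" using d0 by (simp add: powr_mult)
  have t3: "2 powr (P + 1) = 2 powr P * 2" by (simp add: powr_add)
  have pos: "0 < 2 powr P" by simp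
  have "\<rho> powr P / 2 powr (P + 1) = (z / 2) * \<delta> powr P"
    using zr t2 t3 pos by (simp add: field_simps)
  also have "\<dots> \<le> real m * \<delta> powr P" using m1 by (intro mult_right_mono) auto
  finally show "\<rho> powr P / 2 powr (P + 1) \<le> real (nat \<lfloor>(\<rho> / (2 * \<delta>)) powr P\<rfloor>) * \<delta> powr P"
    unfolding m_def z_def q_def .
qed

lemma Phi_mono:
  fixes t1 t2 P :: real
  assumes "0 \<le> t1" "t1 \<le> t2" "0 \<le> P"
  shows "sum_mset (image_mset (\<lambda>y. enn2real (min (setdist_e d y A) (ennreal t1)) powr P) \<gamma>)
       \<le> sum_mset (image_mset (\<lambda>y. enn2real (min (setdist_e d y A) (ennreal t2)) powr P) \<gamma>)"
proof (intro sum_mset_mono)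
  fix y
  have "min (setdist_e d y A) (ennreal t1) \<le> min (setdist_e d y A) (ennreal t2)"
    using assms by (intro min.mono) auto
  moreover have "min (setdist_e d y A) (ennreal t2) < top"
    by (metis ennreal_less_top min.strict_coboundedI2)
  ultimately have "enn2real (min (setdist_e d y A) (ennreal t1)) \<le> enn2real (min (setdist_e d y A) (ennreal t2))"
    by (rule enn2real_mono)
  then show "enn2real (min (setdist_e d y A) (ennreal t1)) powr P \<le> enn2real (min (setdist_e d y A) (ennreal t2)) powr P"
    using assms by (intro powr_mono2) auto
qed

lemma no_cpt_nbhd:
  assumes dm: "ext_metric d" and cl: "closed_e d A" and ni: "\<not> isolated_set d A" and p1: "1 \<le> p"
    and aD: "\<alpha> \<in> diagrams A" and U: "openin (Wp_topology d A p) U" and K: "compactin (Wp_topology d A p) K"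
    and aU: "\<alpha> \<in> U" and UK: "U \<subseteq> K"
  shows False
proof -
  obtain r where r0: "0 < r" and rU: "{\<beta> \<in> diagrams A. wasserstein d A p \<alpha> \<beta> < r} \<subseteq> U"
    using U aU unfolding openin_Wp emetric_open_def by blast
  obtain \<rho> :: real where r0': "0 < \<rho>" "\<rho> \<le> 1" "ennreal \<rho> \<le> r"
  proof (cases "r = top")
    case True then show ?thesis using that[of 1] by simp
  next
    case False
    then have re: "r = ennreal (enn2real r)" by (simp add: ennreal_enn2real_if)
    have rp: "0 < enn2real r" using r0 False by (simp add: enn2real_positive_iff less_top)
    show ?thesis
    proof (rule that[of "min 1 (enn2real r)"])
      show "0 < min 1 (enn2real r)" using rp by simp
      show "min 1 (enn2real r) \<le> 1" by simp
      have "ennreal (min 1 (enn2real r)) \<le> ennreal (enn2real r)" by (intro ennreal_leI) simp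
      then show "ennreal (min 1 (enn2real r)) \<le> r" using re by simp
    qed
  qed
  have ball: "\<beta> \<in> K" if "\<beta> \<in> diagrams A" "wasserstein d A p \<alpha> \<beta> < ennreal \<rho>" for \<beta>
  proof -
    have "wasserstein d A p \<alpha> \<beta> < r" using that(2) r0'(3) by (rule less_le_trans)
    then show ?thesis using rU UK that(1) by blast
  qed
  have KD: "K \<subseteq> diagrams A" using compactin_subset_topspace[OF K] by (simp add: topspace_Wp)
  have aK: "\<alpha> \<in> K" using aU UK by blast
  have Dx: "\<And>m x. x \<notin> A \<Longrightarrow> \<alpha> + replicate_mset m x \<in> diagrams A"
    using aD by (auto simp: diagrams_def)
  have dsym: "\<And>u v. d u v = d v u" using dm unfolding ext_metric_def by blast
  show False
  proof (cases "p = top")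
    case True
    have "0 < ennreal \<rho>" using r0' by simp
    then obtain x where x: "x \<notin> A" "setdist_e d x A < ennreal \<rho>" using sd_small[OF dm ni] by blast
    define \<delta> where "\<delta> = enn2real (setdist_e d x A)"
    have sdx: "setdist_e d x A = ennreal \<delta>"
      unfolding \<delta>_def using x(2) by (metis ennreal_enn2real_if ennreal_less_top order.asym)
    have d0: "0 < \<delta>" using sd_pos[OF cl x(1)] sdx by simp
    obtain a where a: "a \<in> A" "d x a < ennreal \<rho>" using x(2) unfolding setdist_e_def INF_less_iff by blast
    have dax: "d a x < ennreal \<rho>" using a dsym by simp
    let ?h = "\<lambda>y. max 0 (enn2real (min (setdist_e d y A) (ennreal \<delta>)) - \<delta>/2)"
    let ?\<Psi> = "\<lambda>\<gamma>. sum_mset (image_mset ?h \<gamma>)"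
    define Ob where "Ob k = {\<gamma> \<in> diagrams A. ?\<Psi> \<gamma> < real k}" for k :: nat
    have Oo: "\<And>k. openin (Wp_topology d A p) (Ob k)" using open_inf[OF dm d0] True unfolding Ob_def by simp
    have cov: "K \<subseteq> \<Union>(range Ob)"
    proof
      fix \<gamma> assume g: "\<gamma> \<in> K"
      obtain k where "?\<Psi> \<gamma> < real k" using reals_Archimedean2 by blast
      then show "\<gamma> \<in> \<Union>(range Ob)" using g KD unfolding Ob_def by blast
    qed
    have H: "(\<forall>V\<in>range Ob. openin (Wp_topology d A p) V) \<and> K \<subseteq> \<Union>(range Ob)" using Oo cov by blast
    from K have "\<forall>\<U>. (\<forall>V\<in>\<U>. openin (Wp_topology d A p) V) \<and> K \<subseteq> \<Union>\<U> \<longrightarrow> (\<exists>\<F>. finite \<F> \<and> \<F> \<subseteq> \<U> \<and> K \<subseteq> \<Union>\<F>)"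
      unfolding compactin_def by blast
    from spec[OF this, of "range Ob"] H obtain F where F: "finite F" "F \<subseteq> range Ob" "K \<subseteq> \<Union>F"
      by blast
    obtain S where S: "finite S" "F = Ob ` S" using finite_subset_image[OF F(1,2)] by blast
    obtain N where N: "\<forall>k\<in>S. k \<le> N" using finite_nat_set_iff_bounded_le S(1) by blast
    have KN: "?\<Psi> \<gamma> < real N" if gK: "\<gamma> \<in> K" for \<gamma>
    proof -
      obtain k where "k \<in> S" "\<gamma> \<in> Ob k" using F(3) S(2) gK by blast
      then show ?thesis using N unfolding Ob_def by force
    qed
    define m where "m = nat \<lceil>2 * real N / \<delta>\<rceil>"
    define \<beta> where "\<beta> = \<alpha> + replicate_mset m x"
    have "wasserstein d A p \<alpha> \<beta> \<le> d a x" unfolding \<beta>_def True by (rule W_M0_inf[OF dm aD a(1) x(1)])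
    then have bK: "\<beta> \<in> K" using ball Dx[OF x(1)] dax unfolding \<beta>_def by (meson le_less_trans)
    have hx: "?h x = \<delta>/2" using sdx d0 by simp
    have "?\<Psi> \<beta> = ?\<Psi> \<alpha> + real m * (\<delta>/2)" unfolding \<beta>_def using hx by simp
    moreover have "0 \<le> ?\<Psi> \<alpha>" by (intro sum_mset_nonneg') auto
    moreover have "real N \<le> real m * (\<delta>/2)"
    proof -
      have "2 * real N / \<delta> \<le> real m" unfolding m_def by linarith
      then show ?thesis using d0 by (simp add: field_simps)
    qed
    ultimately show False using KN[OF bK] by linarith
  next
    case False
    let ?P = "enn2real p"
    have "p < top" using False by (simp add: less_top)
    from enn2real_mono[OF p1 this] have P1: "1 \<le> ?P" by simp
    define c where "c = \<rho> powr ?P / 2 powr (?P + 1)"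
    have c0: "0 < c" unfolding c_def using r0' by simp
    define \<Phi> where "\<Phi> t \<gamma> = sum_mset (image_mset (\<lambda>y. enn2real (min (setdist_e d y A) (ennreal t)) powr ?P) \<gamma>)" for t \<gamma>
    define Ob where "Ob t = {\<gamma> \<in> diagrams A. \<Phi> t \<gamma> < c}" for t
    have Oo: "\<And>t. t \<in> {0<..} \<Longrightarrow> openin (Wp_topology d A p) (Ob t)"
      unfolding Ob_def \<Phi>_def using open_fin[OF dm False p1] by simp
    have cov: "K \<subseteq> \<Union>(Ob ` {0<..})"
    proof
      fix \<gamma> assume g: "\<gamma> \<in> K"
      define t where "t = min 1 (c / (real (size \<gamma>) + 1))"
      have t0: "0 < t" "t \<le> 1" unfolding t_def using c0 by auto
      have "\<Phi> t \<gamma> \<le> sum_mset (image_mset (\<lambda>_. t) \<gamma>)"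
        unfolding \<Phi>_def
      proof (intro sum_mset_mono)
        fix y
        have "enn2real (min (setdist_e d y A) (ennreal t)) \<le> t"
          using t0 by (intro enn2real_le_of) auto
        then have "enn2real (min (setdist_e d y A) (ennreal t)) powr ?P \<le> t powr ?P"
          using P1 by (intro powr_mono2) auto
        also have "\<dots> \<le> t powr 1" using powr_mono'[of 1 ?P t] P1 t0 by simp
        finally show "enn2real (min (setdist_e d y A) (ennreal t)) powr ?P \<le> t" using t0 by simp
      qed
      also have "\<dots> = real (size \<gamma>) * t" by simp
      also have "\<dots> \<le> real (size \<gamma>) * (c / (real (size \<gamma>) + 1))"
        unfolding t_def by (intro mult_left_mono) auto
      also have "\<dots> < c" using c0 by (simp add: field_simps)
      finally show "\<gamma> \<in> \<Union>(Ob ` {0<..})" using g KD t0 unfolding Ob_def by blast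
    qed
    have H: "(\<forall>V\<in>Ob ` {0<..}. openin (Wp_topology d A p) V) \<and> K \<subseteq> \<Union>(Ob ` {0<..})" using Oo cov by blast
    from K have "\<forall>\<U>. (\<forall>V\<in>\<U>. openin (Wp_topology d A p) V) \<and> K \<subseteq> \<Union>\<U> \<longrightarrow> (\<exists>\<F>. finite \<F> \<and> \<F> \<subseteq> \<U> \<and> K \<subseteq> \<Union>\<F>)"
      unfolding compactin_def by blast
    from spec[OF this, of "Ob ` {0<..}"] H obtain F where F: "finite F" "F \<subseteq> Ob ` {0<..}" "K \<subseteq> \<Union>F"
      by blast
    obtain S where S: "finite S" "S \<subseteq> {0<..}" "F = Ob ` S" using finite_subset_image[OF F(1,2)] by blast
    have Sne: "S \<noteq> {}" using S F(3) aK by auto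
    define ts where "ts = Min S"
    have ts: "ts \<in> S" "\<And>t. t \<in> S \<Longrightarrow> ts \<le> t" unfolding ts_def using S(1) Sne by auto
    have ts0: "0 < ts" using ts(1) S(2) by auto
    have KN: "\<Phi> ts \<gamma> < c" if gK: "\<gamma> \<in> K" for \<gamma>
    proof -
      obtain t where t: "t \<in> S" "\<gamma> \<in> Ob t" using F(3) S(3) gK by blast
      have "\<Phi> ts \<gamma> \<le> \<Phi> t \<gamma>" unfolding \<Phi>_def using ts(2)[OF t(1)] ts0 P1 by (intro Phi_mono) auto
      then show ?thesis using t(2) unfolding Ob_def by simp
    qed
    have mpos: "0 < min ts (\<rho>/4)" using ts0 r0' by simp
    have "0 < ennreal (min ts (\<rho>/4))" using mpos by simp
    then obtain x where x: "x \<notin> A" "setdist_e d x A < ennreal (min ts (\<rho>/4))"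
      using sd_small[OF dm ni] by blast
    define \<delta> where "\<delta> = enn2real (setdist_e d x A)"
    have sdx: "setdist_e d x A = ennreal \<delta>"
      unfolding \<delta>_def using x(2) by (metis ennreal_enn2real_if ennreal_less_top order.asym)
    have d0: "0 < \<delta>" using sd_pos[OF cl x(1)] sdx by simp
    have dlt: "\<delta> < min ts (\<rho>/4)" using x(2) sdx d0 by (simp add: ennreal_less_iff)
    have "setdist_e d x A < ennreal (2 * \<delta>)" using sdx d0 by (simp add: ennreal_less_iff)
    then obtain a where a: "a \<in> A" "d x a < ennreal (2 * \<delta>)" unfolding setdist_e_def INF_less_iff by blast
    define s where "s = enn2real (d a x)"
    have dlt2: "d a x < ennreal (2 * \<delta>)" using a(2) dsym by simp
    have "d a x \<noteq> top" using dlt2 by (auto simp: top_unique)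
    then have dax: "d a x = ennreal s" unfolding s_def by (simp add: ennreal_enn2real_if)
    have s0: "0 \<le> s" unfolding s_def by simp
    have s2: "s < 2 * \<delta>" using dlt2 dax s0 by (simp add: ennreal_less_iff)
    define m where "m = nat \<lfloor>(\<rho> / (2 * \<delta>)) powr ?P\<rfloor>"
    define \<beta> where "\<beta> = \<alpha> + replicate_mset m x"
    have dr: "4 * \<delta> < \<rho>" using dlt by simp
    note nm = numerics[OF P1 d0 dr s0 s2]
    have "wasserstein d A p \<alpha> \<beta> \<le> ennreal ((real m * s powr ?P) powr (1 / ?P))"
      unfolding \<beta>_def by (rule W_M0_fin[OF dm aD a(1) x(1) False p1 dax s0])
    also have "\<dots> < ennreal \<rho>"
    proof -
      have "(real m * s powr ?P) powr (1 / ?P) < (\<rho> powr ?P) powr (1 / ?P)"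
        using nm(1) P1 unfolding m_def by (intro powr_less_mono2) auto
      also have "\<dots> = \<rho>" using P1 r0' by (simp add: powr_powr)
      finally show ?thesis using r0' by (simp add: ennreal_less_iff)
    qed
    finally have bK: "\<beta> \<in> K" using ball Dx[OF x(1)] unfolding \<beta>_def by blast
    have hx: "enn2real (min (setdist_e d x A) (ennreal ts)) powr ?P = \<delta> powr ?P"
      using sdx dlt d0 by simp
    have "\<Phi> ts \<beta> = \<Phi> ts \<alpha> + real m * \<delta> powr ?P" unfolding \<beta>_def \<Phi>_def using hx by simp
    moreover have "0 \<le> \<Phi> ts \<alpha>" unfolding \<Phi>_def by (intro sum_mset_nonneg') auto
    moreover have "c \<le> real m * \<delta> powr ?P" using nm(2) unfolding c_def m_def .
    ultimately show False using KN[OF bK] by linarith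
  qed
qed


theorem theorem7p10:
  fixes d :: "'a \<Rightarrow> 'a \<Rightarrow> ennreal" and A :: "'a set" and p :: ennreal
  assumes "ext_metric d"
    and "closed_e d A"
    and "\<not> isolated_set d A"
    and "1 \<le> p"
  shows "(\<forall>\<alpha>\<in>diagrams A. \<not> (\<exists>U K. openin (Wp_topology d A p) U \<and> compactin (Wp_topology d A p) K
                                  \<and> \<alpha> \<in> U \<and> U \<subseteq> K))
    \<and> \<not> locally_compact_space (Wp_topology d A p)
    \<and> (\<forall>K. compactin (Wp_topology d A p) K \<longrightarrow> (Wp_topology d A p) interior_of K = {})"
proof -
  have P1: "\<forall>\<alpha>\<in>diagrams A. \<not> (\<exists>U K. openin (Wp_topology d A p) U \<and> compactin (Wp_topology d A p) K
                                  \<and> \<alpha> \<in> U \<and> U \<subseteq> K)"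
    using no_cpt_nbhd[OF assms] by blast
  moreover have "\<not> locally_compact_space (Wp_topology d A p)"
  proof
    assume "locally_compact_space (Wp_topology d A p)"
    moreover have "{#} \<in> diagrams A" by (simp add: diagrams_def)
    ultimately show False using P1 unfolding locally_compact_space_def topspace_Wp by blast
  qed
  moreover have "\<forall>K. compactin (Wp_topology d A p) K \<longrightarrow> (Wp_topology d A p) interior_of K = {}"
  proof (intro allI impI)
    fix K assume K: "compactin (Wp_topology d A p) K"
    show "(Wp_topology d A p) interior_of K = {}"
    proof (rule ccontr)
      assume "(Wp_topology d A p) interior_of K \<noteq> {}"
      then obtain \<alpha> where a: "\<alpha> \<in> (Wp_topology d A p) interior_of K" by blast
      have "\<alpha> \<in> diagrams A" using a interior_of_subset_topspace[of "Wp_topology d A p" K]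
        by (auto simp: topspace_Wp)
      moreover have "openin (Wp_topology d A p) ((Wp_topology d A p) interior_of K)" by simp
      moreover have "(Wp_topology d A p) interior_of K \<subseteq> K" by (rule interior_of_subset)
      ultimately show False using P1 K a by blast
    qed
  qed
  ultimately show ?thesis by blast
qed

end
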